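(* Let $0<c<M$, $\varepsilon,\lambda,\Delta x>0$, $T>0$. Let $(\tau_i(s),u_i(s))_{i\in\mathbb Z}$ and $(\bar\tau_i(s),\bar u_i(s))_{i\in\mathbb Z}$ be measurable in $s\in[0,T)$ with $\tau_i,\bar\tau_i\in[c,M]$, $(\tau_i-\bar\tau_i)_i\in\ell^2(\mathbb Z)$ for each $s$, $\int_0^T\phi^\varepsilon(s)ds<\infty$, and $\|D_{xx}\bar\tau\|_{L^\infty(Q_T)}<\infty$, $\|D_x\bar\tau\|_{L^\infty(Q_T)}<\infty$. Then there is a constant $C>0$ depending only on $p$, $c$, $M$ such that for all $t\in[0,T)$, $$\int_0^t\sum_{i\in\mathbb Z}\Delta x\,R_i^\tau\,ds\le\lambda\Big(C\,\Delta x\,\|D_{xx}\bar\tau\|_{L^\infty(Q_T)}+C\,\|D_x\bar\tau\|_{L^\infty(Q_T)}\Big)\int_0^t\phi^\varepsilon(s)\,ds.$$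
   Context: The pressure $p\in C^2((0,\infty))$ satisfies $p>0$, $p'<0$. Fix $\tau_\star>0$, $P(\tau)=\int_{\tau_\star}^\tau p(s)ds$, $P(\tau|\bar\tau)=P(\tau)-P(\bar\tau)-p(\bar\tau)(\tau-\bar\tau)$. $R_i^\tau=-\frac{\lambda}{2\Delta x}\Big((p(\tau_i)-p(\bar\tau_i))(\tau_{i+1}-2\tau_i+\tau_{i-1})-(\tau_i-\bar\tau_i)p'(\bar\tau_i)(\bar\tau_{i+1}-2\bar\tau_i+\bar\tau_{i-1})\Big)$. $\eta_i^\varepsilon=\frac{\varepsilon^2}{2}(u_i-\bar u_i)^2-P(\tau_i|\bar\tau_i)$, $\phi^\varepsilon(s)=\sum_{i\in\mathbb Z}\Delta x\,\eta_i^\varepsilon(s)$. $Q_T=\mathbb R\times[0,T)$, $\|D_xv\|_{L^\infty(Q_T)}=\sup_{s,i}|\frac{v_{i+1}-v_i}{\Delta x}|$, $\|D_{xx}v\|_{L^\infty(Q_T)}=\sup_{s,i}|\frac{v_{i+1}-2v_i+v_{i-1}}{(\Delta x)^2}|$. *)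

theory Defs
  imports "HOL-Analysis.Analysis"
begin

definition Pprim :: "(real \<Rightarrow> real) \<Rightarrow> real \<Rightarrow> real \<Rightarrow> real" where
  "Pprim p tstar tau = (LBINT s=tstar..tau. p s)"

definition Prel :: "(real \<Rightarrow> real) \<Rightarrow> real \<Rightarrow> real \<Rightarrow> real \<Rightarrow> real" where
  "Prel p tstar tau taub =
     Pprim p tstar tau - Pprim p tstar taub - p taub * (tau - taub)"

definition Rtau :: "(real \<Rightarrow> real) \<Rightarrow> (real \<Rightarrow> real) \<Rightarrow> real \<Rightarrow> real
    \<Rightarrow> (int \<Rightarrow> real \<Rightarrow> real) \<Rightarrow> (int \<Rightarrow> real \<Rightarrow> real) \<Rightarrow> int \<Rightarrow> real \<Rightarrow> real" where
  "Rtau p p' lam dx tau taub i s =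
     - (lam / (2 * dx)) *
       ((p (tau i s) - p (taub i s)) * (tau (i+1) s - 2 * tau i s + tau (i-1) s)
        - (tau i s - taub i s) * p' (taub i s) * (taub (i+1) s - 2 * taub i s + taub (i-1) s))"

definition eta :: "(real \<Rightarrow> real) \<Rightarrow> real \<Rightarrow> real
    \<Rightarrow> (int \<Rightarrow> real \<Rightarrow> real) \<Rightarrow> (int \<Rightarrow> real \<Rightarrow> real)
    \<Rightarrow> (int \<Rightarrow> real \<Rightarrow> real) \<Rightarrow> (int \<Rightarrow> real \<Rightarrow> real) \<Rightarrow> int \<Rightarrow> real \<Rightarrow> real" where
  "eta p tstar eps tau u taub ub i s =
     eps^2 / 2 * (u i s - ub i s)^2 - Prel p tstar (tau i s) (taub i s)"

text \<open>phi^eps(s) = sum_i dx * eta_i^eps(s), as an extended nonnegative real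
  (eta is nonnegative since P is concave; the sum may be infinite).\<close>
definition phi :: "(real \<Rightarrow> real) \<Rightarrow> real \<Rightarrow> real \<Rightarrow> real
    \<Rightarrow> (int \<Rightarrow> real \<Rightarrow> real) \<Rightarrow> (int \<Rightarrow> real \<Rightarrow> real)
    \<Rightarrow> (int \<Rightarrow> real \<Rightarrow> real) \<Rightarrow> (int \<Rightarrow> real \<Rightarrow> real) \<Rightarrow> real \<Rightarrow> ennreal" where
  "phi p tstar eps dx tau u taub ub s =
     (\<integral>\<^sup>+ i. ennreal (dx * eta p tstar eps tau u taub ub i s) \<partial>count_space UNIV)"

definition Dx_set :: "real \<Rightarrow> real \<Rightarrow> (int \<Rightarrow> real \<Rightarrow> real) \<Rightarrow> real set" where
  "Dx_set T dx v = {\<bar>(v (i+1) s - v i s) / dx\<bar> | i s. s \<in> {0..<T}}"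

definition Dxx_set :: "real \<Rightarrow> real \<Rightarrow> (int \<Rightarrow> real \<Rightarrow> real) \<Rightarrow> real set" where
  "Dxx_set T dx v = {\<bar>(v (i+1) s - 2 * v i s + v (i-1) s) / dx^2\<bar> | i s. s \<in> {0..<T}}"

definition Dx_norm :: "real \<Rightarrow> real \<Rightarrow> (int \<Rightarrow> real \<Rightarrow> real) \<Rightarrow> real" where
  "Dx_norm T dx v = Sup (Dx_set T dx v)"

definition Dxx_norm :: "real \<Rightarrow> real \<Rightarrow> (int \<Rightarrow> real \<Rightarrow> real) \<Rightarrow> real" where
  "Dxx_norm T dx v = Sup (Dxx_set T dx v)"

end

theory Submission
  imports Defs
begin

lemma lip_bound:
  fixes f f' :: "real \<Rightarrow> real"
  assumes d: "\<And>x. lo \<le> x \<Longrightarrow> x \<le> hi \<Longrightarrow> (f has_real_derivative f' x) (at x)"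
      and b: "\<And>x. lo \<le> x \<Longrightarrow> x \<le> hi \<Longrightarrow> \<bar>f' x\<bar> \<le> L"
      and x: "lo \<le> x" "x \<le> hi" and y: "lo \<le> y" "y \<le> hi"
  shows "\<bar>f y - f x\<bar> \<le> L * \<bar>y - x\<bar>"
proof -
  have *: "\<bar>f bb - f a\<bar> \<le> L*(bb-a)" if "lo \<le> a" "a < bb" "bb \<le> hi" for a bb
  proof -
    have "\<exists>z. a<z \<and> z<bb \<and> f bb - f a = (bb-a)*f' z"
      by (rule MVT2) (use that d in auto)
    then obtain z where z: "a<z" "z<bb" "f bb - f a = (bb-a)*f' z" by blast
    have "\<bar>f' z\<bar> \<le> L" using b z that by auto
    then have "(bb-a)*\<bar>f' z\<bar> \<le> (bb-a)*L" using that by (intro mult_left_mono) auto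
    then show ?thesis using z that by (simp add: abs_mult mult.commute)
  qed
  show ?thesis
  proof (cases x y rule: linorder_cases)
    case less then show ?thesis using *[of x y] x y by auto
  next
    case equal then show ?thesis by simp
  next
    case greater then show ?thesis using *[of y x] x y by (auto simp: abs_minus_commute)
  qed
qed


lemma aux_lin:
  fixes X A Y B :: real
  assumes "X \<le> A + Y" "2*Y \<le> A + B" "0 \<le> B" "0 \<le> A"
  shows "X \<le> 2*(B + A)"
  using assms by simp

lemma Pprim_deriv:
  assumes cont: "continuous_on {0<..} p" and ts: "tstar > 0" and x: "x > 0"
  shows "((Pprim p tstar) has_real_derivative p x) (at x)"
proof -
  define d where "d = min tstar x / 2"
  define e where "e = max tstar x + 1"
  have dpos: "d > 0" using ts x by (simp add: d_def)
  have "continuous_on {d..e} p"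
    by (rule continuous_on_subset[OF cont]) (use dpos in auto)
  then have "((\<lambda>u. LBINT y=tstar..u. p y) has_vector_derivative p x) (at x within {d..e})"
    by (intro interval_integral_FTC2) (use ts x in \<open>auto simp: d_def e_def min_def\<close>)
  then have "((\<lambda>u. LBINT y=tstar..u. p y) has_vector_derivative p x) (at x within {d<..<e})"
    by (rule has_vector_derivative_within_subset) auto
  then have "((\<lambda>u. LBINT y=tstar..u. p y) has_vector_derivative p x) (at x)"
    by (subst (asm) has_vector_derivative_within_open) (use x ts in \<open>auto simp: d_def e_def\<close>)
  then show ?thesis
    by (simp add: has_real_derivative_iff_has_vector_derivative Pprim_def[abs_def])
qed

lemma summable_bound:
  fixes f B :: "int \<Rightarrow> real"
  assumes "B summable_on UNIV" "\<And>i. \<bar>f i\<bar> \<le> B i"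
  shows "f summable_on UNIV"
proof -
  have eq: "(\<lambda>i. norm (B i)) = B"
  proof
    fix i have "0 \<le> B i" using assms(2)[of i] abs_ge_zero order_trans by blast
    then show "norm (B i) = B i" by simp
  qed
  have "(\<lambda>i. norm (B i)) summable_on UNIV" unfolding eq by (rule assms(1))
  then have "(\<lambda>i. norm (f i)) summable_on UNIV"
  proof (rule Infinite_Sum.abs_summable_on_comparison_test)
    fix i assume "i \<in> (UNIV::int set)"
    show "norm (f i) \<le> norm (B i)"
      unfolding real_norm_def by (rule order_trans[OF assms(2) abs_ge_self])
  qed
  then show ?thesis by (rule summable_on_iff_abs_summable_on_real[THEN iffD2])
qed

lemma shift_bij: "bij_betw (\<lambda>i::int. i + k) UNIV UNIV"
  by (rule bij_betwI[where g="\<lambda>i. i - k"]) auto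

lemma shift_summable:
  fixes f :: "int \<Rightarrow> real"
  assumes "f summable_on UNIV"
  shows "(\<lambda>i. f (i + k)) summable_on UNIV" "(\<Sum>\<^sub>\<infinity>i. f (i + k)) = (\<Sum>\<^sub>\<infinity>i. f i)"
  using summable_on_reindex_bij_betw[OF shift_bij[of k], of f] assms
    infsum_reindex_bij_betw[OF shift_bij[of k], of f] by auto

lemma absxy: "\<bar>x\<bar> * \<bar>y\<bar> \<le> x^2 + (y::real)^2"
proof -
  have "2*(\<bar>x\<bar>*\<bar>y\<bar>) \<le> x^2+y^2"
    using sum_squares_bound[of "\<bar>x\<bar>" "\<bar>y\<bar>"] by (simp add: power2_eq_square)
  moreover have "0 \<le> \<bar>x\<bar>*\<bar>y\<bar>" by simp
  ultimately show ?thesis by linarith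
qed

locale press =
  fixes p p' p'' :: "real \<Rightarrow> real" and c M m L1 L2 :: real
  assumes pd: "\<And>x. x>0 \<Longrightarrow> (p has_real_derivative p' x) (at x)"
    and p'd: "\<And>x. x>0 \<Longrightarrow> (p' has_real_derivative p'' x) (at x)"
    and pneg: "\<And>x. x>0 \<Longrightarrow> p' x < 0"
    and cM: "0<c" "c<M"
    and mpos: "m>0" and mb: "\<And>x. c\<le>x \<Longrightarrow> x\<le>M \<Longrightarrow> p' x \<le> -m"
    and L1b: "\<And>x. c\<le>x \<Longrightarrow> x\<le>M \<Longrightarrow> \<bar>p' x\<bar> \<le> L1"
    and L2b: "\<And>x. c/2\<le>x \<Longrightarrow> x\<le>M+c/2 \<Longrightarrow> \<bar>p'' x\<bar> \<le> L2"
begin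

lemma L1nn: "L1 \<ge> 0" using L1b[of c] cM by auto
lemma L2nn: "L2 \<ge> 0" using L2b[of c] cM by auto

lemma g_bound:
  assumes "c\<le>a" "a\<le>M" "c\<le>b" "b\<le>M"
  shows "\<bar>p a - p b\<bar> \<le> L1 * \<bar>a - b\<bar>"
proof (rule lip_bound[of c M p p' L1])
  fix x assume x: "c \<le> x" "x \<le> M"
  then show "(p has_real_derivative p' x) (at x)" using cM by (intro pd) linarith
  show "\<bar>p' x\<bar> \<le> L1" using L1b x by blast
qed (fact assms)+

lemma p'_lip:
  assumes "c/2\<le>a" "a\<le>M+c/2" "c/2\<le>b" "b\<le>M+c/2"
  shows "\<bar>p' a - p' b\<bar> \<le> L2 * \<bar>a - b\<bar>"
proof (rule lip_bound[of "c/2" "M+c/2" p' p'' L2])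
  fix x assume x: "c/2 \<le> x" "x \<le> M+c/2"
  then show "(p' has_real_derivative p'' x) (at x)" using cM by (intro p'd) linarith
  show "\<bar>p'' x\<bar> \<le> L2" using L2b x by blast
qed (fact assms)+

lemma h_bound:
  assumes "c\<le>a" "a\<le>M" "c\<le>b" "b\<le>M"
  shows "\<bar>p a - p b - p' b * (a - b)\<bar> \<le> L2 * (a - b)^2"
proof -
  define f where "f x = p x - p' b * x" for x
  have "\<bar>f a - f b\<bar> \<le> (L2 * \<bar>a - b\<bar>) * \<bar>a - b\<bar>"
  proof (rule lip_bound[of "min a b" "max a b" f "\<lambda>x. p' x - p' b"])
    fix x assume x: "min a b \<le> x" "x \<le> max a b"
    then have "x > 0" using assms cM by auto
    then show "(f has_real_derivative p' x - p' b) (at x)"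
      unfolding f_def by (auto intro!: derivative_eq_intros pd)
    have "\<bar>p' x - p' b\<bar> \<le> L2 * \<bar>x - b\<bar>"
      by (rule p'_lip) (use x assms cM in auto)
    also have "\<dots> \<le> L2 * \<bar>a - b\<bar>"
      by (rule mult_left_mono) (use x L2nn in auto)
    finally show "\<bar>p' x - p' b\<bar> \<le> L2 * \<bar>a - b\<bar>" .
  qed auto
  then show ?thesis by (simp add: f_def power2_eq_square algebra_simps abs_mult)
qed

lemma p_decr: "x>0 \<Longrightarrow> y>0 \<Longrightarrow> (p x - p y) * (x - y) \<le> 0"
proof -
  have mono: "p v \<le> p u" if "0<u" "u\<le>v" for u v
  proof (rule DERIV_nonpos_imp_nonincreasing[OF that(2)])
    fix z assume "u \<le> z" "z \<le> v"
    then have "z > 0" using that by simp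
    then show "\<exists>y. (p has_real_derivative y) (at z) \<and> y \<le> 0"
      using pd[of z] pneg[of z] by (intro exI[of _ "p' z"]) auto
  qed
  assume xy: "x>0" "y>0"
  show ?thesis
  proof (cases "x \<le> y")
    case True
    then have "p y \<le> p x" using mono xy by auto
    then show ?thesis using True by (intro mult_nonneg_nonpos) auto
  next
    case False
    then have "p x \<le> p y" using mono xy by auto
    then show ?thesis using False by (intro mult_nonpos_nonneg) auto
  qed
qed

lemma bracket:
  assumes "c\<le>b" "b\<le>M" "c\<le>b'" "b'\<le>M" "c\<le>a'" "a'\<le>M" "\<bar>b'-b\<bar> < c/2"
  shows "\<bar>p a' - p b' - p (b + (a'-b')) + p b\<bar> \<le> L2 * \<bar>a'-b'\<bar> * \<bar>b'-b\<bar>"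
proof -
  define w where "w = a' - b'"
  define f where "f x = p (x + w) - p x" for x
  have "\<bar>f b' - f b\<bar> \<le> (L2 * \<bar>w\<bar>) * \<bar>b' - b\<bar>"
  proof (rule lip_bound[of "min b b'" "max b b'" f "\<lambda>x. p' (x+w) - p' x"])
    fix x assume x: "min b b' \<le> x" "x \<le> max b b'"
    have xb: "\<bar>x - b'\<bar> \<le> \<bar>b' - b\<bar>" using x by (cases "b \<le> b'") (auto simp: min_def max_def)
    then have "\<bar>x - b'\<bar> < c/2" using assms(7) by linarith
    then have "x - b' < c/2" "b' - x < c/2" using abs_ge_self[of "x-b'"] abs_ge_minus_self[of "x-b'"] by linarith+
    then have xw: "c/2 \<le> x + w" "x + w \<le> M + c/2" using assms(5,6) by (auto simp: w_def)
    have "x > 0" "x + w > 0" using x xw assms cM by auto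
    then show "(f has_real_derivative p' (x+w) - p' x) (at x)"
      unfolding f_def by (auto intro!: derivative_eq_intros pd DERIV_chain2[OF pd])
    have "\<bar>p' (x+w) - p' x\<bar> \<le> L2 * \<bar>(x+w) - x\<bar>"
      by (rule p'_lip) (use x xw assms cM in auto)
    then show "\<bar>p' (x+w) - p' x\<bar> \<le> L2 * \<bar>w\<bar>" by simp
  qed auto
  then show ?thesis by (simp add: f_def w_def algebra_simps)
qed

definition "K2 = max (2*L2) (4*L1/c)"

lemma Q_bound:
  assumes "c\<le>a" "a\<le>M" "c\<le>b" "b\<le>M" "c\<le>a'" "a'\<le>M" "c\<le>b'" "b'\<le>M"
  shows "((p a' - p b') - (p a - p b)) * ((a'-b') - (a-b)) \<le> K2 * \<bar>b'-b\<bar> * ((a-b)^2 + (a'-b')^2)"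
proof -
  define w where "w = a - b"
  define w' where "w' = a' - b'"
  have sq: "2*(\<bar>x\<bar>*\<bar>y\<bar>) \<le> x^2+y^2" for x y :: real
    using sum_squares_bound[of "\<bar>x\<bar>" "\<bar>y\<bar>"] by (simp add: power2_eq_square)
  have S0: "0 \<le> w^2 + w'^2" by simp
  show ?thesis
  proof (cases "\<bar>b'-b\<bar> < c/2")
    case True
    have "b' - b < c/2" "b - b' < c/2" using True abs_ge_self[of "b'-b"] abs_ge_minus_self[of "b'-b"] by linarith+
    then have pos: "b+w' > 0" "b+w > 0" using assms cM by (auto simp: w_def w'_def)
    have "(p (b+w') - p (b+w)) * ((b+w') - (b+w)) \<le> 0" by (rule p_decr[OF pos])
    then have Q0: "(p (b+w') - p (b+w)) * (w' - w) \<le> 0" by simp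
    have B: "\<bar>p a' - p b' - p (b + w') + p b\<bar> \<le> L2 * \<bar>w'\<bar> * \<bar>b'-b\<bar>"
      using bracket[OF assms(3,4,7,8,5,6) True] by (simp add: w'_def)
    have eq: "((p a' - p b') - (p a - p b)) * ((a'-b') - (a-b)) =
        (p (b+w') - p (b+w)) * (w' - w) + (p a' - p b' - p (b + w') + p b) * (w' - w)"
      by (simp add: w_def w'_def algebra_simps)
    have "(p a' - p b' - p (b + w') + p b) * (w' - w) \<le> \<bar>p a' - p b' - p (b + w') + p b\<bar> * \<bar>w' - w\<bar>"
      by (simp only: abs_mult[symmetric] abs_ge_self)
    also have "\<dots> \<le> L2 * \<bar>w'\<bar> * \<bar>b'-b\<bar> * \<bar>w' - w\<bar>"
      by (rule mult_right_mono[OF B]) simp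
    also have "\<dots> = L2 * \<bar>b'-b\<bar> * (\<bar>w'\<bar> * \<bar>w' - w\<bar>)" by simp
    also have "\<dots> \<le> L2 * \<bar>b'-b\<bar> * (2 * (w^2 + w'^2))"
    proof (rule mult_left_mono)
      have "\<bar>w'\<bar> * \<bar>w' - w\<bar> \<le> \<bar>w'\<bar> * (\<bar>w'\<bar> + \<bar>w\<bar>)"
        by (rule mult_left_mono) auto
      also have "\<dots> = w'^2 + \<bar>w'\<bar>*\<bar>w\<bar>" by (simp add: power2_eq_square algebra_simps)
      finally show "\<bar>w'\<bar> * \<bar>w' - w\<bar> \<le> 2 * (w^2 + w'^2)" using aux_lin[OF _ sq[of w' w] zero_le_power2[of w] zero_le_power2[of w']] by blast
    qed (use L2nn in auto)
    also have "\<dots> \<le> K2 * \<bar>b'-b\<bar> * (w^2 + w'^2)"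
    proof -
      have "2*L2 \<le> K2" by (simp add: K2_def)
      then have "2*L2 * (\<bar>b'-b\<bar> * (w^2 + w'^2)) \<le> K2 * (\<bar>b'-b\<bar> * (w^2 + w'^2))"
        by (rule mult_right_mono) simp
      then show ?thesis by (simp add: algebra_simps)
    qed
    finally show ?thesis using eq Q0 by (simp add: w_def w'_def)
  next
    case False
    have g1: "\<bar>p a - p b\<bar> \<le> L1 * \<bar>w\<bar>" using g_bound assms by (simp add: w_def)
    have g2: "\<bar>p a' - p b'\<bar> \<le> L1 * \<bar>w'\<bar>" using g_bound assms by (simp add: w'_def)
    have "((p a' - p b') - (p a - p b)) * ((a'-b') - (a-b)) \<le>
        \<bar>(p a' - p b') - (p a - p b)\<bar> * \<bar>w' - w\<bar>"
      by (simp add: w_def w'_def abs_mult[symmetric])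
    also have "\<dots> \<le> (L1 * (\<bar>w'\<bar> + \<bar>w\<bar>)) * (\<bar>w'\<bar> + \<bar>w\<bar>)"
    proof (rule mult_mono)
      show "\<bar>(p a' - p b') - (p a - p b)\<bar> \<le> L1 * (\<bar>w'\<bar> + \<bar>w\<bar>)"
        using g1 g2 by (simp add: distrib_left)
    qed (use L1nn in auto)
    also have "\<dots> = L1 * (w^2 + w'^2 + 2*(\<bar>w'\<bar>*\<bar>w\<bar>))"
      by (simp add: power2_eq_square algebra_simps)
    also have "\<dots> \<le> L1 * (2*(w^2 + w'^2))"
      by (rule mult_left_mono) (use sq[of w' w] L1nn in auto)
    also have "\<dots> \<le> K2 * \<bar>b'-b\<bar> * (w^2 + w'^2)"
    proof -
      have "L1 * 2 \<le> (4*L1/c) * \<bar>b'-b\<bar>"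
      proof -
        have "(4*L1/c) * \<bar>b'-b\<bar> \<ge> (4*L1/c) * (c/2)"
          by (rule mult_left_mono) (use False L1nn cM in auto)
        then show ?thesis using cM by simp
      qed
      also have "\<dots> \<le> K2 * \<bar>b'-b\<bar>"
        by (rule mult_right_mono) (auto simp: K2_def)
      finally have "L1 * 2 * (w^2 + w'^2) \<le> K2 * \<bar>b'-b\<bar> * (w^2 + w'^2)"
        by (rule mult_right_mono) simp
      then show ?thesis by (simp add: algebra_simps)
    qed
    finally show ?thesis by (simp add: w_def w'_def)
  qed
qed

lemma Prel_bound:
  assumes cont: "continuous_on {0<..} p" and ts: "tstar>0"
    and "c\<le>x" "x\<le>M" "c\<le>y" "y\<le>M"
  shows "Prel p tstar y x \<le> - (m/2) * (y - x)^2"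
proof -
  define psi where "psi z = Pprim p tstar z - Pprim p tstar x - p x * (z - x) + m/2 * (z-x)^2" for z
  have dpsi: "(psi has_real_derivative (p z - p x + m * (z - x))) (at z)" if "z>0" for z
    unfolding psi_def using that
    by (auto intro!: derivative_eq_intros Pprim_deriv[OF cont ts] simp: power2_eq_square algebra_simps)
  have pm: "p v + m * v \<le> p u + m * u" if "c\<le>u" "u\<le>v" "v\<le>M" for u v
  proof (rule DERIV_nonpos_imp_nonincreasing[OF that(2)])
    fix z assume z: "u \<le> z" "z \<le> v"
    then have "z > 0" "p' z \<le> -m" using that cM mb[of z] by auto
    then show "\<exists>y. ((\<lambda>z. p z + m * z) has_real_derivative y) (at z) \<and> y \<le> 0"
      by (intro exI[of _ "p' z + m"]) (auto intro!: derivative_eq_intros pd)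
  qed
  have "psi y \<le> psi x"
  proof (cases "x \<le> y")
    case True
    show ?thesis
    proof (rule DERIV_nonpos_imp_nonincreasing[OF True])
      fix z assume z: "x \<le> z" "z \<le> y"
      have "p z - p x + m * (z - x) \<le> 0" using pm[of x z] z assms by (simp add: algebra_simps)
      then show "\<exists>d. (psi has_real_derivative d) (at z) \<and> d \<le> 0"
        using dpsi[of z] z assms cM by auto
    qed
  next
    case False
    show ?thesis
    proof (rule DERIV_nonneg_imp_nondecreasing[of y x psi])
      show "y \<le> x" using False by simp
      fix z assume z: "y \<le> z" "z \<le> x"
      have "p z - p x + m * (z - x) \<ge> 0" using pm[of z x] z assms by (simp add: algebra_simps)
      then show "\<exists>d. (psi has_real_derivative d) (at z) \<and> d \<ge> 0"
        using dpsi[of z] z assms cM by auto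
    qed
  qed
  then show ?thesis by (simp add: psi_def Prel_def algebra_simps)
qed


lemma K2nn: "K2 \<ge> 0" using L2nn by (simp add: K2_def)

lemma sum_bound:
  fixes tau taub :: "int \<Rightarrow> real \<Rightarrow> real" and s lam dx Ea Eb :: real
  assumes ab: "\<And>i. c \<le> tau i s \<and> tau i s \<le> M \<and> c \<le> taub i s \<and> taub i s \<le> M"
    and sw: "(\<lambda>i. (tau i s - taub i s)^2) summable_on UNIV"
    and hEa: "\<And>i. \<bar>taub (i+1) s - taub i s\<bar> \<le> dx * Ea"
    and hEb: "\<And>i. \<bar>taub (i+1) s - 2 * taub i s + taub (i-1) s\<bar> \<le> dx^2 * Eb"
    and dx: "dx > 0" and lam: "lam > 0"
  shows "(\<Sum>\<^sub>\<infinity>i. dx * Rtau p p' lam dx tau taub i s)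
     \<le> lam * dx * (L2/2 * dx * Eb + K2 * Ea) * (\<Sum>\<^sub>\<infinity>i. (tau i s - taub i s)^2)"
proof -
  define a where "a i = tau i s" for i
  define b where "b i = taub i s" for i
  define w where "w i = a i - b i" for i
  define g where "g i = p (a i) - p (b i)" for i
  define h where "h i = g i - p' (b i) * w i" for i
  define d2 where "d2 i = b (i+1) - 2 * b i + b (i-1)" for i
  define A where "A i = g i * (w (i+1) - w i)" for i
  define A2 where "A2 i = g (i+1) * (w (i+1) - w i)" for i
  define V where "V i = (-(lam/2)) * (h i * d2 i) + (lam/2) * A2 i + (-(lam/2)) * A i" for i
  define S where "S = (\<Sum>\<^sub>\<infinity>i. (w i)^2)"
  have abi: "c \<le> a i" "a i \<le> M" "c \<le> b i" "b i \<le> M" for i using ab by (auto simp: a_def b_def)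
  have Ea: "\<bar>b (i+1) - b i\<bar> \<le> dx*Ea" for i using hEa by (simp add: b_def)
  have Eb: "\<bar>d2 i\<bar> \<le> dx^2 * Eb" for i using hEb by (simp add: b_def d2_def)
  have "0 \<le> dx*Ea" using Ea[of 0] abs_ge_zero order_trans by blast
  then have Eann: "Ea \<ge> 0" using dx by (simp add: zero_le_mult_iff)
  have "0 \<le> dx^2*Eb" using Eb[of 0] abs_ge_zero order_trans by blast
  then have Ebnn: "Eb \<ge> 0" using dx by (simp add: zero_le_mult_iff)
  have s0: "(\<lambda>i. (w i)^2) summable_on UNIV" using sw by (simp add: w_def a_def b_def)
  have s1: "(\<lambda>i. (w (i+1))^2) summable_on UNIV" and s1eq: "(\<Sum>\<^sub>\<infinity>i. (w (i+1))^2) = S"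
    using shift_summable[OF s0, of 1] by (auto simp: S_def)
  have sm1: "(\<lambda>i. (w (i-1))^2) summable_on UNIV"
    using shift_summable[OF s0, of "-1"] by simp
  define Bf where "Bf i = (w (i-1))^2 + (w i)^2 + (w (i+1))^2" for i
  have sB: "Bf summable_on UNIV"
    unfolding Bf_def by (intro summable_on_add s0 s1 sm1)
  have Bb: "(w i)^2 \<le> Bf i" "(w (i+1))^2 \<le> Bf i" "(w (i-1))^2 \<le> Bf i" for i
    by (auto simp: Bf_def)
  have gb: "\<bar>g i\<bar> \<le> L1 * \<bar>w i\<bar>" for i
    unfolding g_def w_def by (rule g_bound) (use abi in auto)
  have hb: "\<bar>h i\<bar> \<le> L2 * (w i)^2" for i
    unfolding h_def g_def w_def by (rule h_bound) (use abi in auto)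
  have gen: "\<bar>g j * (x - y)\<bar> \<le> L1 * ((w j)^2 + ((w j)^2 + z^2))"
    if "\<bar>x - y\<bar> \<le> \<bar>w j\<bar> + \<bar>z\<bar>" for j x y z
  proof -
    have "\<bar>g j * (x - y)\<bar> = \<bar>g j\<bar> * \<bar>x - y\<bar>" by (simp add: abs_mult)
    also have "\<dots> \<le> (L1 * \<bar>w j\<bar>) * (\<bar>w j\<bar> + \<bar>z\<bar>)"
      by (rule mult_mono[OF gb that]) (use L1nn in auto)
    also have "\<dots> = L1 * ((w j)^2 + \<bar>w j\<bar> * \<bar>z\<bar>)"
      by (simp add: power2_eq_square algebra_simps)
    also have "\<dots> \<le> L1 * ((w j)^2 + ((w j)^2 + z^2))"
      by (rule mult_left_mono) (use absxy[of "w j" z] L1nn in auto)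
    finally show ?thesis .
  qed
  have bA: "\<bar>A i\<bar> \<le> (3*L1) * Bf i" for i
  proof -
    have "\<bar>A i\<bar> \<le> L1 * ((w i)^2 + ((w i)^2 + (w (i+1))^2))"
      unfolding A_def by (rule gen) auto
    also have "\<dots> \<le> L1 * (3 * Bf i)"
      by (rule mult_left_mono) (use Bb[of i] L1nn in auto)
    finally show ?thesis by simp
  qed
  have bA2: "\<bar>A2 i\<bar> \<le> (3*L1) * Bf i" for i
  proof -
    have "\<bar>A2 i\<bar> \<le> L1 * ((w (i+1))^2 + ((w (i+1))^2 + (w i)^2))"
      unfolding A2_def by (rule gen) auto
    also have "\<dots> \<le> L1 * (3 * Bf i)"
      by (rule mult_left_mono) (use Bb[of i] L1nn in auto)
    finally show ?thesis by simp
  qed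
  have bA2m: "\<bar>A2 (i-1)\<bar> \<le> (3*L1) * Bf i" for i
  proof -
    have "\<bar>A2 (i-1)\<bar> \<le> L1 * ((w i)^2 + ((w i)^2 + (w (i-1))^2))"
      unfolding A2_def by (simp only: diff_add_cancel, rule gen) auto
    also have "\<dots> \<le> L1 * (3 * Bf i)"
      by (rule mult_left_mono) (use Bb[of i] L1nn in auto)
    finally show ?thesis by simp
  qed
  have bT: "\<bar>h i * d2 i\<bar> \<le> (L2 * dx^2 * Eb) * Bf i" for i
  proof -
    have "\<bar>h i * d2 i\<bar> = \<bar>h i\<bar> * \<bar>d2 i\<bar>" by (simp add: abs_mult)
    also have "\<dots> \<le> (L2 * (w i)^2) * (dx^2 * Eb)"
      by (rule mult_mono[OF hb Eb]) (use L2nn in auto)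
    also have "\<dots> \<le> (L2 * dx^2 * Eb) * Bf i"
      using mult_left_mono[OF Bb(1)[of i], of "L2 * dx^2 * Eb"] L2nn Ebnn
      by (simp add: algebra_simps)
    finally show ?thesis .
  qed
  have sA: "A summable_on UNIV" by (rule summable_bound[OF summable_on_cmult_right[OF sB] bA])
  have sA2: "A2 summable_on UNIV" by (rule summable_bound[OF summable_on_cmult_right[OF sB] bA2])
  have sA2m: "(\<lambda>i. A2 (i-1)) summable_on UNIV" by (rule summable_bound[OF summable_on_cmult_right[OF sB] bA2m])
  have sT: "(\<lambda>i. h i * d2 i) summable_on UNIV" by (rule summable_bound[OF summable_on_cmult_right[OF sB] bT])
  have sV: "V summable_on UNIV"
    unfolding V_def by (intro summable_on_add summable_on_cmult_right sA sA2 sT)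
  have ident: "dx * Rtau p p' lam dx tau taub i s = V i + (lam/2) * A2 (i-1) + (-(lam/2)) * A2 i" for i
  proof -
    define X where "X = (p (tau i s) - p (taub i s)) * (tau (i+1) s - 2 * tau i s + tau (i-1) s)
        - (tau i s - taub i s) * p' (taub i s) * (taub (i+1) s - 2 * taub i s + taub (i-1) s)"
    have inner: "X = g i * (w (i+1) - 2 * w i + w (i-1)) + h i * d2 i"
      unfolding X_def h_def d2_def g_def w_def a_def b_def by algebra
    have "dx * Rtau p p' lam dx tau taub i s = dx * (- (lam / (2 * dx)) * X)"
      by (simp only: Rtau_def X_def)
    also have "\<dots> = -(lam/2) * X" using dx by simp
    also have "\<dots> = V i + (lam/2) * A2 (i-1) + (-(lam/2)) * A2 i"
      unfolding inner V_def A_def A2_def by (simp add: algebra_simps)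
    finally show ?thesis .
  qed
  have "(\<Sum>\<^sub>\<infinity>i. dx * Rtau p p' lam dx tau taub i s) = (\<Sum>\<^sub>\<infinity>i. V i + (lam/2) * A2 (i-1) + (-(lam/2)) * A2 i)"
    by (simp add: ident)
  also have "\<dots> = (\<Sum>\<^sub>\<infinity>i. V i) + (lam/2) * (\<Sum>\<^sub>\<infinity>i. A2 (i-1)) + (-(lam/2)) * (\<Sum>\<^sub>\<infinity>i. A2 i)"
  proof -
    have c1: "(\<lambda>i. (lam/2) * A2 (i-1)) summable_on UNIV" by (rule summable_on_cmult_right[OF sA2m])
    have c2: "(\<lambda>i. (-(lam/2)) * A2 i) summable_on UNIV" by (rule summable_on_cmult_right[OF sA2])
    have "(\<Sum>\<^sub>\<infinity>i. V i + (lam/2) * A2 (i-1) + (-(lam/2)) * A2 i)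
        = (\<Sum>\<^sub>\<infinity>i. V i + (lam/2) * A2 (i-1)) + (\<Sum>\<^sub>\<infinity>i. (-(lam/2)) * A2 i)"
      by (rule infsum_add[OF summable_on_add[OF sV c1] c2])
    also have "(\<Sum>\<^sub>\<infinity>i. V i + (lam/2) * A2 (i-1)) = (\<Sum>\<^sub>\<infinity>i. V i) + (\<Sum>\<^sub>\<infinity>i. (lam/2) * A2 (i-1))"
      by (rule infsum_add[OF sV c1])
    also have "(\<Sum>\<^sub>\<infinity>i. (lam/2) * A2 (i-1)) = (lam/2) * (\<Sum>\<^sub>\<infinity>i. A2 (i-1))"
      by (rule infsum_cmult_right')
    also have "(\<Sum>\<^sub>\<infinity>i. (-(lam/2)) * A2 i) = (-(lam/2)) * (\<Sum>\<^sub>\<infinity>i. A2 i)"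
      by (rule infsum_cmult_right')
    finally show ?thesis .
  qed
  also have "(\<Sum>\<^sub>\<infinity>i. A2 (i-1)) = (\<Sum>\<^sub>\<infinity>i. A2 i)"
    using shift_summable(2)[OF sA2, of "-1"] by simp
  finally have eq: "(\<Sum>\<^sub>\<infinity>i. dx * Rtau p p' lam dx tau taub i s) = (\<Sum>\<^sub>\<infinity>i. V i)" by simp
  define k0 where "k0 = (lam/2) * (L2 * dx^2 * Eb) + (lam/2) * (K2*dx*Ea)"
  define k1 where "k1 = (lam/2) * (K2*dx*Ea)"
  define U where "U i = k0 * (w i)^2 + k1 * (w (i+1))^2" for i
  have VU: "V i \<le> U i" for i
  proof -
    have t1: "(-(lam/2)) * (h i * d2 i) \<le> (lam/2) * ((L2 * dx^2 * Eb) * (w i)^2)"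
    proof -
      have "\<bar>h i * d2 i\<bar> \<le> (L2 * (w i)^2) * (dx^2 * Eb)"
        by (simp only: abs_mult, rule mult_mono[OF hb Eb]) (use L2nn in auto)
      then have "-(h i * d2 i) \<le> (L2 * dx^2 * Eb) * (w i)^2" by (simp add: algebra_simps)
      then have "(lam/2) * (-(h i * d2 i)) \<le> (lam/2) * ((L2 * dx^2 * Eb) * (w i)^2)"
        using lam by (intro mult_left_mono) auto
      then show ?thesis by simp
    qed
    have "A2 i - A i = ((p (a (i+1)) - p (b (i+1))) - (p (a i) - p (b i))) * ((a (i+1) - b (i+1)) - (a i - b i))"
      by (simp add: A2_def A_def g_def w_def algebra_simps)
    also have "\<dots> \<le> K2 * \<bar>b (i+1) - b i\<bar> * ((a i - b i)^2 + (a (i+1) - b (i+1))^2)"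
      by (rule Q_bound) (use abi in auto)
    also have "\<dots> \<le> K2 * (dx * Ea) * ((w i)^2 + (w (i+1))^2)"
      by (unfold w_def, intro mult_right_mono mult_left_mono Ea K2nn) auto
    finally have t2: "(lam/2) * (A2 i - A i) \<le> (lam/2) * (K2 * (dx * Ea) * ((w i)^2 + (w (i+1))^2))"
      using lam by (intro mult_left_mono) auto
    show ?thesis using t1 t2 by (simp add: V_def U_def k0_def k1_def algebra_simps)
  qed
  have sU: "U summable_on UNIV"
    unfolding U_def by (intro summable_on_add summable_on_cmult_right s0 s1)
  have "(\<Sum>\<^sub>\<infinity>i. V i) \<le> (\<Sum>\<^sub>\<infinity>i. U i)" by (rule infsum_mono[OF sV sU VU])
  also have "(\<Sum>\<^sub>\<infinity>i. U i) = k0 * S + k1 * S"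
  proof -
    have "(\<Sum>\<^sub>\<infinity>i. U i) = (\<Sum>\<^sub>\<infinity>i. k0 * (w i)^2) + (\<Sum>\<^sub>\<infinity>i. k1 * (w (i+1))^2)"
      unfolding U_def
      by (rule infsum_add[OF summable_on_cmult_right[OF s0] summable_on_cmult_right[OF s1]])
    also have "\<dots> = k0 * S + k1 * S"
      by (simp only: infsum_cmult_right' s1eq S_def)
    finally show ?thesis .
  qed
  also have "\<dots> = lam * dx * (L2/2 * dx * Eb + K2 * Ea) * S"
    by (simp add: k0_def k1_def power2_eq_square field_simps)
  finally show ?thesis using eq by (simp add: S_def w_def a_def b_def)
qed

end

lemma nn_count_infsum:
  fixes F :: "int \<Rightarrow> real"
  assumes "F summable_on UNIV" "\<And>i. F i \<ge> 0"
  shows "(\<integral>\<^sup>+i. ennreal (F i) \<partial>count_space UNIV) = ennreal (\<Sum>\<^sub>\<infinity>i. F i)"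
proof -
  have "(\<lambda>i. norm (F i)) summable_on UNIV" using assms by simp
  then have ab: "Infinite_Set_Sum.abs_summable_on F UNIV" using abs_summable_equivalent by blast
  show ?thesis using nn_integral_conv_infsetsum[OF ab] infsetsum_infsum[OF ab] assms(2) by simp
qed

theorem lemma3p4:
  fixes p p' p'' :: "real \<Rightarrow> real" and c M :: real
  assumes p_deriv: "\<forall>x>0. (p has_real_derivative p' x) (at x)"
      and p'_deriv: "\<forall>x>0. (p' has_real_derivative p'' x) (at x)"
      and p''_cont: "continuous_on {0<..} p''"
      and p_pos: "\<forall>x>0. p x > 0"
      and p'_neg: "\<forall>x>0. p' x < 0"
      and cM: "0 < c" "c < M"
  shows "\<exists>C>0. \<forall>tstar eps lam dx T
           (tau :: int \<Rightarrow> real \<Rightarrow> real) (u :: int \<Rightarrow> real \<Rightarrow> real)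
           (taub :: int \<Rightarrow> real \<Rightarrow> real) (ub :: int \<Rightarrow> real \<Rightarrow> real).
      tstar > 0 \<longrightarrow> eps > 0 \<longrightarrow> lam > 0 \<longrightarrow> dx > 0 \<longrightarrow> T > 0 \<longrightarrow>
      (\<forall>i. tau i \<in> borel_measurable (restrict_space lborel {0..<T})) \<longrightarrow>
      (\<forall>i. u i \<in> borel_measurable (restrict_space lborel {0..<T})) \<longrightarrow>
      (\<forall>i. taub i \<in> borel_measurable (restrict_space lborel {0..<T})) \<longrightarrow>
      (\<forall>i. ub i \<in> borel_measurable (restrict_space lborel {0..<T})) \<longrightarrow>
      (\<forall>i. \<forall>s\<in>{0..<T}. tau i s \<in> {c..M} \<and> taub i s \<in> {c..M}) \<longrightarrow>
      (\<forall>s\<in>{0..<T}. (\<lambda>i. (tau i s - taub i s)^2) summable_on UNIV) \<longrightarrow>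
      set_nn_integral lborel {0..<T} (phi p tstar eps dx tau u taub ub) < \<infinity> \<longrightarrow>
      bdd_above (Dxx_set T dx taub) \<longrightarrow>
      bdd_above (Dx_set T dx taub) \<longrightarrow>
      (\<forall>t\<in>{0..<T}.
         (LINT s:{0..t}|lborel. (\<Sum>\<^sub>\<infinity>i. dx * Rtau p p' lam dx tau taub i s))
         \<le> lam * (C * dx * Dxx_norm T dx taub + C * Dx_norm T dx taub)
               * enn2real (set_nn_integral lborel {0..t} (phi p tstar eps dx tau u taub ub)))"
proof -
  have contp: "continuous_on {0<..} p"
    by (rule continuous_at_imp_continuous_on) (use p_deriv in \<open>auto intro: DERIV_isCont\<close>)
  have contp': "continuous_on {0<..} p'"
    by (rule continuous_at_imp_continuous_on) (use p'_deriv in \<open>auto intro: DERIV_isCont\<close>)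
  have cM1: "continuous_on {c..M} p'" by (rule continuous_on_subset[OF contp']) (use cM in auto)
  obtain x0 where x0: "x0 \<in> {c..M}" "\<forall>y\<in>{c..M}. p' y \<le> p' x0"
    using continuous_attains_sup[OF _ _ cM1] cM by auto
  obtain x1 where x1: "x1 \<in> {c..M}" "\<forall>y\<in>{c..M}. norm (p' y) \<le> norm (p' x1)"
    using continuous_attains_sup[OF _ _ continuous_on_norm[OF cM1]] cM by auto
  have cM2: "continuous_on {c/2..M+c/2} p''" by (rule continuous_on_subset[OF p''_cont]) (use cM in auto)
  obtain x2 where x2: "x2 \<in> {c/2..M+c/2}" "\<forall>y\<in>{c/2..M+c/2}. norm (p'' y) \<le> norm (p'' x2)"
    using continuous_attains_sup[OF _ _ continuous_on_norm[OF cM2]] cM by auto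
  define m where "m = - p' x0"
  define L1 where "L1 = \<bar>p' x1\<bar>"
  define L2 where "L2 = \<bar>p'' x2\<bar>"
  have mpos: "m > 0" using p'_neg x0 cM by (auto simp: m_def)
  interpret P: press p p' p'' c M m L1 L2
  proof
    show "\<And>x. x>0 \<Longrightarrow> (p has_real_derivative p' x) (at x)" using p_deriv by auto
    show "\<And>x. x>0 \<Longrightarrow> (p' has_real_derivative p'' x) (at x)" using p'_deriv by auto
    show "\<And>x. x>0 \<Longrightarrow> p' x < 0" using p'_neg by auto
    show "0 < c" "c < M" by (fact cM)+
    show "m > 0" by (fact mpos)
    show "\<And>x. c\<le>x \<Longrightarrow> x\<le>M \<Longrightarrow> p' x \<le> -m" using x0 by (auto simp: m_def)
    show "\<And>x. c\<le>x \<Longrightarrow> x\<le>M \<Longrightarrow> \<bar>p' x\<bar> \<le> L1" using x1 by (auto simp: L1_def)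
    show "\<And>x. c/2\<le>x \<Longrightarrow> x\<le>M+c/2 \<Longrightarrow> \<bar>p'' x\<bar> \<le> L2" using x2 by (auto simp: L2_def)
  qed
  define C where "C = max 1 (max (L2/m) (2*P.K2/m))"
  have Cpos: "C > 0" by (simp add: C_def)
  have C1: "L2/m \<le> C" "2*P.K2/m \<le> C" by (auto simp: C_def)
  show ?thesis
  proof (rule exI[of _ C], intro conjI allI impI ballI)
    show "C > 0" by (fact Cpos)
    fix tstar eps lam dx T :: real and tau u taub ub :: "int \<Rightarrow> real \<Rightarrow> real" and t :: real
    assume ts: "tstar > 0" and eps: "eps > 0" and lam: "lam > 0" and dx: "dx > 0" and T: "T > 0"
      and m1: "\<forall>i. tau i \<in> borel_measurable (restrict_space lborel {0..<T})"
      and m2: "\<forall>i. u i \<in> borel_measurable (restrict_space lborel {0..<T})"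
      and m3: "\<forall>i. taub i \<in> borel_measurable (restrict_space lborel {0..<T})"
      and m4: "\<forall>i. ub i \<in> borel_measurable (restrict_space lborel {0..<T})"
      and rng: "\<forall>i. \<forall>s\<in>{0..<T}. tau i s \<in> {c..M} \<and> taub i s \<in> {c..M}"
      and sw: "\<forall>s\<in>{0..<T}. (\<lambda>i. (tau i s - taub i s)^2) summable_on UNIV"
      and finT: "set_nn_integral lborel {0..<T} (phi p tstar eps dx tau u taub ub) < \<infinity>"
      and bdd2: "bdd_above (Dxx_set T dx taub)"
      and bdd1: "bdd_above (Dx_set T dx taub)"
      and t: "t \<in> {0..<T}"
    define D1 where "D1 = Dx_norm T dx taub"
    define D2 where "D2 = Dxx_norm T dx taub"
    define ph where "ph = phi p tstar eps dx tau u taub ub"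
    define f where "f s = (\<Sum>\<^sub>\<infinity>i. dx * Rtau p p' lam dx tau taub i s)" for s
    define S where "S s = (\<Sum>\<^sub>\<infinity>i. (tau i s - taub i s)^2)" for s
    define K where "K = lam * (C * dx * D2 + C * D1)"
    have hD1: "\<bar>taub (i+1) s - taub i s\<bar> \<le> dx * D1" if s: "s \<in> {0..<T}" for i s
    proof -
      have "\<bar>(taub (i+1) s - taub i s) / dx\<bar> \<in> Dx_set T dx taub"
        unfolding Dx_set_def using s by blast
      then have "\<bar>(taub (i+1) s - taub i s) / dx\<bar> \<le> D1"
        unfolding D1_def Dx_norm_def by (rule cSup_upper[OF _ bdd1])
      then show ?thesis using dx by (simp add: abs_divide pos_divide_le_eq mult.commute)
    qed
    have hD2: "\<bar>taub (i+1) s - 2 * taub i s + taub (i-1) s\<bar> \<le> dx^2 * D2" if s: "s \<in> {0..<T}" for i s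
    proof -
      have "\<bar>(taub (i+1) s - 2 * taub i s + taub (i-1) s) / dx^2\<bar> \<in> Dxx_set T dx taub"
        unfolding Dxx_set_def using s by blast
      then have "\<bar>(taub (i+1) s - 2 * taub i s + taub (i-1) s) / dx^2\<bar> \<le> D2"
        unfolding D2_def Dxx_norm_def by (rule cSup_upper[OF _ bdd2])
      then show ?thesis using dx by (simp add: abs_divide pos_divide_le_eq mult.commute)
    qed
    have T0: "0 \<in> {0..<T}" using T by simp
    have D1nn: "D1 \<ge> 0"
    proof -
      have "0 \<le> dx * D1" using hD1[OF T0, of 0] abs_ge_zero order_trans by blast
      then show ?thesis using dx by (simp add: zero_le_mult_iff)
    qed
    have D2nn: "D2 \<ge> 0"
    proof -
      have "0 \<le> dx^2 * D2" using hD2[OF T0, of 0] abs_ge_zero order_trans by blast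
      then show ?thesis using dx by (simp add: zero_le_mult_iff)
    qed
    have Knn: "K \<ge> 0" using lam dx Cpos D1nn D2nn by (simp add: K_def)
    have key: "ennreal (max (f s) 0) \<le> ennreal K * ph s" if s: "s \<in> {0..<T}" for s
    proof -
      have ab: "\<And>i. c \<le> tau i s \<and> tau i s \<le> M \<and> c \<le> taub i s \<and> taub i s \<le> M"
        using rng s by auto
      have sws: "(\<lambda>i. (tau i s - taub i s)^2) summable_on UNIV" using sw s by auto
      have Snn: "S s \<ge> 0" unfolding S_def by (rule infsum_nonneg) simp
      have "f s \<le> lam * dx * (L2/2 * dx * D2 + P.K2 * D1) * S s"
        unfolding f_def S_def
        by (rule P.sum_bound[where tau=tau and taub=taub and s=s and dx=dx and lam=lam and Ea=D1 and Eb=D2,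
              OF ab sws hD1[OF s] hD2[OF s] dx lam])
      also have "\<dots> = lam * ((L2/m) * dx * D2 + (2*P.K2/m) * D1) * (dx * (m/2) * S s)"
        using mpos by (simp add: field_simps)
      also have "\<dots> \<le> K * (dx * (m/2) * S s)"
      proof (rule mult_right_mono)
        have "(L2/m) * dx * D2 + (2*P.K2/m) * D1 \<le> C * dx * D2 + C * D1"
        proof (rule add_mono)
          show "(L2/m) * dx * D2 \<le> C * dx * D2"
            using C1(1) dx D2nn by (intro mult_right_mono) auto
          show "(2*P.K2/m) * D1 \<le> C * D1"
            using C1(2) D1nn by (intro mult_right_mono) auto
        qed
        then show "lam * ((L2/m) * dx * D2 + (2*P.K2/m) * D1) \<le> K"
          unfolding K_def using lam by (intro mult_left_mono) auto
        show "0 \<le> dx * (m/2) * S s" using dx mpos Snn by simp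
      qed
      finally have fK: "f s \<le> K * (dx * (m/2) * S s)" .
      have Xnn: "0 \<le> dx * (m/2) * S s" using dx mpos Snn by simp
      have lowb: "ennreal (dx * (m/2) * S s) \<le> ph s"
      proof -
        have etab: "dx * (m/2) * (tau i s - taub i s)^2 \<le> dx * eta p tstar eps tau u taub ub i s" for i
        proof -
          have "Prel p tstar (tau i s) (taub i s) \<le> - (m/2) * (tau i s - taub i s)^2"
            by (rule P.Prel_bound[OF contp ts]) (use ab[of i] in auto)
          then have "(m/2) * (tau i s - taub i s)^2 \<le> eta p tstar eps tau u taub ub i s"
          proof -
            have "0 \<le> eps^2/2*(u i s - ub i s)^2" by simp
            then show ?thesis using \<open>Prel p tstar (tau i s) (taub i s) \<le> - (m/2) * (tau i s - taub i s)^2\<close>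
              unfolding eta_def by linarith
          qed
          then show ?thesis using dx by (simp add: mult.assoc)
        qed
        have "ennreal (dx * (m/2) * S s) = ennreal (\<Sum>\<^sub>\<infinity>i. dx * (m/2) * (tau i s - taub i s)^2)"
          by (simp only: S_def infsum_cmult_right')
        also have "\<dots> = (\<integral>\<^sup>+i. ennreal (dx * (m/2) * (tau i s - taub i s)^2) \<partial>count_space UNIV)"
          by (rule nn_count_infsum[symmetric])
             (rule summable_on_cmult_right[OF sws], use dx mpos in simp)
        also have "\<dots> \<le> ph s"
          unfolding ph_def phi_def by (rule nn_integral_mono) (use etab in \<open>auto intro: ennreal_leI\<close>)
        finally show ?thesis .
      qed
      have KX: "0 \<le> K * (dx * (m/2) * S s)" by (rule mult_nonneg_nonneg[OF Knn Xnn])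
      have "max (f s) 0 \<le> K * (dx * (m/2) * S s)" using fK KX by (simp only: max.bounded_iff)
      then have "ennreal (max (f s) 0) \<le> ennreal (K * (dx * (m/2) * S s))" by (rule ennreal_leI)
      also have "\<dots> = ennreal K * ennreal (dx * (m/2) * S s)" by (rule ennreal_mult[OF Knn Xnn])
      also have "\<dots> \<le> ennreal K * ph s" by (rule mult_left_mono[OF lowb]) simp
      finally show ?thesis .
    qed
    define F where "F s = indicator {0..t} s *\<^sub>R f s" for s
    define Phi where "Phi = set_nn_integral lborel {0..t} ph"
    have lhs: "(LINT s:{0..t}|lborel. (\<Sum>\<^sub>\<infinity>i. dx * Rtau p p' lam dx tau taub i s)) = integral\<^sup>L lborel F"
      unfolding set_lebesgue_integral_def F_def[abs_def] f_def by simp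
    have finPhi: "Phi < \<infinity>"
    proof -
      have "Phi \<le> set_nn_integral lborel {0..<T} ph"
        unfolding Phi_def using t
        by (intro nn_integral_mono) (auto split: split_indicator intro: mult_left_mono)
      then show ?thesis using finT by (simp add: ph_def)
    qed
    have pw: "ennreal (max (F s) 0) \<le> ennreal K * (ph s * indicator {0..t} s)" for s
    proof (cases "s \<in> {0..t}")
      case True
      then have "s \<in> {0..<T}" using t by auto
      then show ?thesis using key[of s] True by (simp add: F_def)
    next
      case False then show ?thesis by (simp add: F_def)
    qed
    have main: "integral\<^sup>L lborel F \<le> K * enn2real Phi"
    proof (cases "integrable lborel F")
      case False
      then show ?thesis using Knn by (simp add: not_integrable_integral_eq)
    next
      case True
      have [measurable]: "F \<in> borel_measurable lborel" using True by (rule borel_measurable_integrable)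
      have "integral\<^sup>L lborel F \<le> integral\<^sup>L lborel (\<lambda>s. max (F s) 0)"
        by (rule integral_mono) (use True in auto)
      also have "\<dots> = enn2real (\<integral>\<^sup>+ s. ennreal (max (F s) 0) \<partial>lborel)"
        by (rule integral_eq_nn_integral) auto
      also have "\<dots> \<le> enn2real (ennreal K * Phi)"
      proof (rule enn2real_mono)
        show "ennreal K * Phi < top" using finPhi by (simp add: ennreal_mult_less_top)
        show "(\<integral>\<^sup>+ s. ennreal (max (F s) 0) \<partial>lborel) \<le> ennreal K * Phi"
        proof (cases "K = 0")
          case True
          have z: "ennreal (max (F s) 0) = 0" for s using pw[of s] True by simp
          show ?thesis by (simp add: z)
        next
          case False
          then have Kpos: "K > 0" using Knn by simp
          have "ennreal (1/K) * (\<integral>\<^sup>+ s. ennreal (max (F s) 0) \<partial>lborel)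
              = (\<integral>\<^sup>+ s. ennreal (1/K) * ennreal (max (F s) 0) \<partial>lborel)"
            by (rule nn_integral_cmult[symmetric]) measurable
          also have "\<dots> \<le> Phi"
            unfolding Phi_def
          proof (rule nn_integral_mono)
            fix s
            have "ennreal (1/K) * ennreal (max (F s) 0) \<le> ennreal (1/K) * (ennreal K * (ph s * indicator {0..t} s))"
              by (rule mult_left_mono[OF pw]) simp
            also have "\<dots> = (ennreal (1/K) * ennreal K) * (ph s * indicator {0..t} s)"
              by (simp add: mult.assoc)
            also have "ennreal (1/K) * ennreal K = 1"
              using Kpos by (simp add: ennreal_mult[symmetric])
            finally show "ennreal (1/K) * ennreal (max (F s) 0) \<le> ph s * indicator {0..t} s" by simp
          qed
          finally have "ennreal (1/K) * (\<integral>\<^sup>+ s. ennreal (max (F s) 0) \<partial>lborel) \<le> Phi" .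
          then have "ennreal K * (ennreal (1/K) * (\<integral>\<^sup>+ s. ennreal (max (F s) 0) \<partial>lborel)) \<le> ennreal K * Phi"
            by (rule mult_left_mono) simp
          also have "ennreal K * (ennreal (1/K) * (\<integral>\<^sup>+ s. ennreal (max (F s) 0) \<partial>lborel))
              = (\<integral>\<^sup>+ s. ennreal (max (F s) 0) \<partial>lborel)"
            using Kpos by (simp add: mult.assoc[symmetric] ennreal_mult[symmetric])
          finally show ?thesis .
        qed
      qed
      also have "\<dots> = K * enn2real Phi"
        using Knn by (simp add: enn2real_mult)
      finally show ?thesis .
    qed
    show "(LINT s:{0..t}|lborel. (\<Sum>\<^sub>\<infinity>i. dx * Rtau p p' lam dx tau taub i s))
         \<le> lam * (C * dx * Dxx_norm T dx taub + C * Dx_norm T dx taub)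
               * enn2real (set_nn_integral lborel {0..t} (phi p tstar eps dx tau u taub ub))"
      using main unfolding lhs by (simp add: K_def D1_def D2_def Phi_def ph_def)
  qed
qed

end
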